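(* Let $\triangle ABC$ be isosceles with base angles $\angle A=\angle B=80^\circ$ (so $\angle C=20^\circ$). For each side of $\triangle ABC$, consider an equilateral triangle of largest area contained in the closed triangle $\triangle ABC$ having one of its sides lying on that side. Then these three largest equilateral triangles (one for each of the sides $BC$, $CA$, $AB$) are congruent.
   Context: An equilateral triangle of largest area contained in $\triangle ABC$ with one side lying on a given side of $\triangle ABC$ is called the wedged equilateral triangle (WET) on that side; it need not have all three vertices on the boundary of $\triangle ABC$. *)

theory Defs
  imports "HOL-Analysis.Analysis"
begin

definition angle_at :: "complex \<Rightarrow> complex \<Rightarrow> complex \<Rightarrow> real" where
  "angle_at V X Y = arccos (((X - V) \<bullet> (Y - V)) / (norm (X - V) * norm (Y - V)))"

definition tri_area :: "complex \<Rightarrow> complex \<Rightarrow> complex \<Rightarrow> real" where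
  "tri_area P Q R = \<bar>Im (cnj (Q - P) * (R - P))\<bar> / 2"

definition equilateral :: "complex \<Rightarrow> complex \<Rightarrow> complex \<Rightarrow> bool" where
  "equilateral P Q R \<longleftrightarrow> dist P Q > 0 \<and> dist P Q = dist Q R \<and> dist Q R = dist R P"

definition inscribed_on_side ::
  "complex \<Rightarrow> complex \<Rightarrow> complex \<Rightarrow> complex \<Rightarrow> complex \<Rightarrow> complex \<Rightarrow> complex \<Rightarrow> complex \<Rightarrow> bool" where
  "inscribed_on_side A B C X Y P Q R \<longleftrightarrow>
     equilateral P Q R \<and> closed_segment P Q \<subseteq> closed_segment X Y \<and>
     convex hull {P, Q, R} \<subseteq> convex hull {A, B, C}"

definition is_WET ::
  "complex \<Rightarrow> complex \<Rightarrow> complex \<Rightarrow> complex \<Rightarrow> complex \<Rightarrow> complex \<Rightarrow> complex \<Rightarrow> complex \<Rightarrow> bool" where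
  "is_WET A B C X Y P Q R \<longleftrightarrow>
     inscribed_on_side A B C X Y P Q R \<and>
     (\<forall>P' Q' R'. inscribed_on_side A B C X Y P' Q' R' \<longrightarrow> tri_area P' Q' R' \<le> tri_area P Q R)"

text \<open>Congruence of triangles (SSS, with corresponding vertices in the given order;
  for equilateral triangles the vertex order is irrelevant).\<close>
definition tri_congruent ::
  "complex \<Rightarrow> complex \<Rightarrow> complex \<Rightarrow> complex \<Rightarrow> complex \<Rightarrow> complex \<Rightarrow> bool" where
  "tri_congruent P Q R P' Q' R' \<longleftrightarrow>
     dist P Q = dist P' Q' \<and> dist Q R = dist Q' R' \<and> dist R P = dist R' P'"

end

theory Submission
  imports Defs
begin


locale simil =
  fixes l :: "complex \<Rightarrow> complex" and r :: real and c :: complex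
  assumes lin: "linear l" and nrm: "\<And>z. norm (l z) = r * norm z" and rpos: "r > 0"
    and ar: "\<And>u v. \<bar>Im (cnj (l u) * l v)\<bar> = r\<^sup>2 * \<bar>Im (cnj u * v)\<bar>"
    and sur: "surj l"
begin

definition f where "f z = c + l z"

lemma f_dist: "dist (f x) (f y) = r * dist x y"
proof -
  have "dist (f x) (f y) = norm (l (x - y))" unfolding f_def dist_norm linear_diff[OF lin] by simp
  then show ?thesis using nrm dist_norm by metis
qed

lemma f_inj: "inj f"
  unfolding inj_def using f_dist rpos by (metis dist_eq_0_iff mult_eq_0_iff less_irrefl)

lemma f_surj: "surj f"
proof -
  have "z = f (inv l (z - c))" for z
    unfolding f_def using surj_f_inv_f[OF sur] by simp
  then show ?thesis by blast
qed

lemma f_img: "f ` S = (\<lambda>x. c + x) ` (l ` S)"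
  unfolding f_def by auto

lemma f_seg: "f ` closed_segment x y = closed_segment (f x) (f y)"
  unfolding f_img f_def closed_segment_translation closed_segment_linear_image[OF lin] ..

lemma f_hull: "f ` (convex hull S) = convex hull (f ` S)"
  unfolding f_img convex_hull_translation convex_hull_linear_image[OF lin] ..

lemma f_area: "tri_area (f P) (f Q) (f R) = r\<^sup>2 * tri_area P Q R"
  unfolding tri_area_def f_def using ar[of "Q - P" "R - P"] linear_diff[OF lin] by simp

lemma f_equi: "equilateral (f P) (f Q) (f R) \<longleftrightarrow> equilateral P Q R"
  unfolding equilateral_def f_dist using rpos by (auto simp: zero_less_mult_iff)

lemma f_insc: "inscribed_on_side (f A) (f B) (f C) (f X) (f Y) (f P) (f Q) (f R) \<longleftrightarrow>
   inscribed_on_side A B C X Y P Q R"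
proof -
  have h: "convex hull {f P, f Q, f R} = f ` (convex hull {P, Q, R})" for P Q R
    using f_hull[of "{P,Q,R}"] by simp
  show ?thesis unfolding inscribed_on_side_def f_equi h
      f_seg[symmetric] inj_image_subset_iff[OF f_inj] ..
qed

lemma f_wet: "is_WET (f A) (f B) (f C) (f X) (f Y) (f P) (f Q) (f R) \<longleftrightarrow>
   is_WET A B C X Y P Q R"
proof
  assume h: "is_WET (f A) (f B) (f C) (f X) (f Y) (f P) (f Q) (f R)"
  show "is_WET A B C X Y P Q R"
    unfolding is_WET_def
  proof (intro conjI allI impI)
    show "inscribed_on_side A B C X Y P Q R" using h f_insc is_WET_def by blast
    fix P' Q' R' assume "inscribed_on_side A B C X Y P' Q' R'"
    then have "tri_area (f P') (f Q') (f R') \<le> tri_area (f P) (f Q) (f R)"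
      using h f_insc is_WET_def by blast
    then show "tri_area P' Q' R' \<le> tri_area P Q R" using f_area rpos by simp
  qed
next
  assume h: "is_WET A B C X Y P Q R"
  show "is_WET (f A) (f B) (f C) (f X) (f Y) (f P) (f Q) (f R)"
    unfolding is_WET_def
  proof (intro conjI allI impI)
    show "inscribed_on_side (f A) (f B) (f C) (f X) (f Y) (f P) (f Q) (f R)" using h f_insc is_WET_def by blast
    fix P' Q' R' assume a: "inscribed_on_side (f A) (f B) (f C) (f X) (f Y) P' Q' R'"
    obtain P'' Q'' R'' where e: "P' = f P''" "Q' = f Q''" "R' = f R''" using f_surj by (metis surjD)
    have "tri_area P'' Q'' R'' \<le> tri_area P Q R" using a h f_insc is_WET_def e by blast
    then show "tri_area P' Q' R' \<le> tri_area (f P) (f Q) (f R)" using f_area rpos e by simp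
  qed
qed

lemma f_cong: "tri_congruent (f P) (f Q) (f R) (f P') (f Q') (f R') \<longleftrightarrow> tri_congruent P Q R P' Q' R'"
  unfolding tri_congruent_def f_dist using rpos by simp

end


definition sg :: real where "sg = sin (pi/18)"
definition kp :: real where "kp = cos (pi/18)"

lemma sg_pos: "0 < sg" unfolding sg_def by (rule sin_gt_zero) auto
lemma kp_pos: "0 < kp" unfolding kp_def by (rule cos_gt_zero_pi) auto
lemma sk1: "sg\<^sup>2 + kp\<^sup>2 = 1" unfolding sg_def kp_def by simp
lemma sg_half: "sg < 1/2"
proof -
  have "sin (pi/18) < sin (pi/6)" by (subst sin_mono_less_eq) auto
  then show ?thesis unfolding sg_def sin_30 .
qed
lemma F2: "sg*kp + (kp\<^sup>2 - sg\<^sup>2) * (sqrt 3/2) = kp"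
proof -
  have "cos (pi/18) = sin (pi/9 + pi/3)" unfolding cos_sin_eq by (simp add: field_simps)
  also have "\<dots> = sin (pi/9) * (1/2) + cos (pi/9) * (sqrt 3/2)"
    unfolding sin_add sin_60 cos_60 ..
  also have "sin (pi/9) = 2 * sg * kp" unfolding sg_def kp_def sin_double[symmetric] by simp
  also have "cos (pi/9) = kp\<^sup>2 - sg\<^sup>2" unfolding sg_def kp_def cos_double[symmetric] by simp
  finally show ?thesis unfolding kp_def by simp
qed
lemma k3: "sqrt 3 * sg \<le> kp"
proof (rule power2_le_imp_le)
  show "(sqrt 3 * sg)\<^sup>2 \<le> kp\<^sup>2" using sk1 sg_half sg_pos
  proof -
    have "sg\<^sup>2 \<le> (1/2)\<^sup>2" using sg_half sg_pos by (intro power_mono) auto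
    then have "sg\<^sup>2 \<le> 1/4" by (simp add: power_divide)
    then show ?thesis using sk1 by (simp add: power_mult_distrib)
  qed
qed (use kp_pos in auto)

lemma equi_area:
  assumes "equilateral P Q R"
  shows "tri_area P Q R = sqrt 3 / 4 * (dist P Q)\<^sup>2"
proof -
  define s where "s = dist P Q"
  define u1 where "u1 = Re Q - Re P"
  define u2 where "u2 = Im Q - Im P"
  define w1 where "w1 = Re R - Re P"
  define w2 where "w2 = Im R - Im P"
  have d: "(dist x y)\<^sup>2 = (Re x - Re y)\<^sup>2 + (Im x - Im y)\<^sup>2" for x y
    unfolding dist_norm cmod_power2 by simp
  have e1: "s\<^sup>2 = u1\<^sup>2 + u2\<^sup>2" unfolding s_def d u1_def u2_def by (simp add: power2_commute)
  have eq: "dist P Q = dist R P" "dist P Q = dist Q R" using assms unfolding equilateral_def by auto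
  have e2: "s\<^sup>2 = w1\<^sup>2 + w2\<^sup>2" unfolding s_def eq(1) d w1_def w2_def by simp
  have e3: "s\<^sup>2 = (u1-w1)\<^sup>2 + (u2-w2)\<^sup>2" unfolding s_def eq(2) d u1_def u2_def w1_def w2_def
    by (simp add: algebra_simps)
  have id: "(u1* w1+u2* w2)\<^sup>2 + (u1* w2-u2* w1)\<^sup>2 = (u1\<^sup>2+u2\<^sup>2)*(w1\<^sup>2+w2\<^sup>2)"
    by (simp add: power2_eq_square algebra_simps)
  have ex: "(u1-w1)\<^sup>2 + (u2-w2)\<^sup>2 = (u1\<^sup>2+u2\<^sup>2) + (w1\<^sup>2+w2\<^sup>2) - 2*(u1 * w1+u2 * w2)"
    by (simp add: power2_diff)
  have "2*(u1 * w1+u2 * w2) = s\<^sup>2" using e1 e2 e3 ex by linarith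
  then have dot: "u1 * w1+u2 * w2 = s\<^sup>2/2" by simp
  have im2: "(u1* w2-u2* w1)\<^sup>2 = (sqrt 3 / 2 * s\<^sup>2)\<^sup>2"
  proof -
    have "(u1 * w2-u2 * w1)\<^sup>2 = s\<^sup>2 * s\<^sup>2 - (s\<^sup>2/2)\<^sup>2"
      using id unfolding dot e1[symmetric] e2[symmetric] by simp
    also have "\<dots> = (sqrt 3 / 2 * s\<^sup>2)\<^sup>2"
      by (simp add: power_mult_distrib power_divide power2_eq_square)
    finally show ?thesis .
  qed
  have "\<bar>u1* w2-u2* w1\<bar> = sqrt 3 / 2 * s\<^sup>2"
  proof -
    have "\<bar>u1 * w2-u2 * w1\<bar> = sqrt ((u1 * w2-u2 * w1)\<^sup>2)" by simp
    also have "\<dots> = sqrt ((sqrt 3 / 2 * s\<^sup>2)\<^sup>2)" unfolding im2 ..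
    also have "\<dots> = sqrt 3 / 2 * s\<^sup>2" by (subst real_sqrt_abs) simp
    finally show ?thesis .
  qed
  moreover have "Im (cnj (Q - P) * (R - P)) = u1* w2-u2* w1"
    unfolding u1_def u2_def w1_def w2_def by (simp add: algebra_simps)
  ultimately show ?thesis unfolding tri_area_def s_def by simp
qed



lemma wet_from_bound:
  assumes ex: "inscribed_on_side A B C X Y P0 Q0 R0" "dist P0 Q0 = s"
    and bd: "\<And>P Q R. inscribed_on_side A B C X Y P Q R \<Longrightarrow> dist P Q \<le> s"
  shows "is_WET A B C X Y P0 Q0 R0"
    and "is_WET A B C X Y P Q R \<Longrightarrow> dist P Q = s \<and> dist Q R = s \<and> dist R P = s"
proof -
  have ar: "tri_area P Q R = sqrt 3 / 4 * (dist P Q)\<^sup>2" if "inscribed_on_side A B C X Y P Q R" for P Q R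
    using that equi_area inscribed_on_side_def by blast
  show w: "is_WET A B C X Y P0 Q0 R0"
    unfolding is_WET_def
  proof (intro conjI allI impI)
    show "inscribed_on_side A B C X Y P0 Q0 R0" by fact
    fix P Q R assume i: "inscribed_on_side A B C X Y P Q R"
    have "dist P Q \<le> s" using bd[OF i] .
    then have "(dist P Q)\<^sup>2 \<le> s\<^sup>2" by (intro power_mono) auto
    then show "tri_area P Q R \<le> tri_area P0 Q0 R0" unfolding ar[OF i] ar[OF ex(1)] ex(2)
      by (intro mult_left_mono) auto
  qed
  assume h: "is_WET A B C X Y P Q R"
  then have i: "inscribed_on_side A B C X Y P Q R" unfolding is_WET_def by blast
  have "tri_area P0 Q0 R0 \<le> tri_area P Q R" using h ex(1) unfolding is_WET_def by blast
  then have "s\<^sup>2 \<le> (dist P Q)\<^sup>2" unfolding ar[OF i] ar[OF ex(1)] ex(2) by simp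
  then have "s \<le> dist P Q" by (rule power2_le_imp_le) simp
  then have "dist P Q = s" using bd[OF i] by simp
  moreover have "equilateral P Q R" using i inscribed_on_side_def by blast
  ultimately show "dist P Q = s \<and> dist Q R = s \<and> dist R P = s" unfolding equilateral_def by simp
qed

definition A0 :: complex where "A0 = 0"
definition B0 :: complex where "B0 = complex_of_real (2 * sg)"
definition C0 :: complex where "C0 = Complex sg kp"

lemma d2: "(dist x y)\<^sup>2 = (Re x - Re y)\<^sup>2 + (Im x - Im y)\<^sup>2"
  unfolding dist_norm cmod_power2 by simp

lemma dist_eq_sq: "dist x y = s \<longleftrightarrow> s \<ge> 0 \<and> (Re x - Re y)\<^sup>2 + (Im x - Im y)\<^sup>2 = s\<^sup>2"
  by (metis d2 power2_eq_iff_nonneg zero_le_dist)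

lemma hull3I: "0 \<le> u \<Longrightarrow> 0 \<le> v \<Longrightarrow> 0 \<le> w \<Longrightarrow> u + v + w = 1 \<Longrightarrow>
   x = u *\<^sub>R a + v *\<^sub>R b + w *\<^sub>R c \<Longrightarrow> x \<in> convex hull {a,b,c}"
  unfolding convex_hull_3 by blast

lemma ab_bound:
  assumes "inscribed_on_side A0 B0 C0 A0 B0 P Q R"
  shows "dist P Q \<le> 2 * sg"
proof -
  have "P \<in> closed_segment A0 B0" "Q \<in> closed_segment A0 B0"
    using assms unfolding inscribed_on_side_def by auto
  then obtain x y where xy: "0 \<le> x" "x \<le> 1" "P = (1 - x) *\<^sub>R A0 + x *\<^sub>R B0"
     "0 \<le> y" "y \<le> 1" "Q = (1 - y) *\<^sub>R A0 + y *\<^sub>R B0" unfolding in_segment by blast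
  have "dist P Q = \<bar>x - y\<bar> * (2 * sg)"
    using xy sg_pos unfolding A0_def B0_def dist_norm
    by (simp add: scaleR_conv_of_real abs_mult flip: of_real_diff of_real_mult left_diff_distrib)
  also have "\<dots> \<le> 1 * (2 * sg)" using xy sg_pos by (intro mult_right_mono) auto
  finally show ?thesis by simp
qed

lemma frame1:
  fixes s k X Y t :: real assumes "s\<^sup>2 + k\<^sup>2 = 1"
  shows "(X + t * s)\<^sup>2 + (Y - t * k)\<^sup>2 = (- X * s + Y * k - t)\<^sup>2 + (- X * k - Y * s)\<^sup>2"
proof -
  have "(X + t * s)\<^sup>2 + (Y - t * k)\<^sup>2 - ((- X * s + Y * k - t)\<^sup>2 + (- X * k - Y * s)\<^sup>2)
     = (X\<^sup>2 + Y\<^sup>2 - t\<^sup>2) * (1 - (s\<^sup>2 + k\<^sup>2))"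
    by (simp add: power2_eq_square algebra_simps)
  then show ?thesis using assms by simp
qed

lemma frame2:
  fixes s k X Y :: real assumes "s\<^sup>2 + k\<^sup>2 = 1"
  shows "k * X - s * Y = - (2 * s * k * (- X * s + Y * k) + (k\<^sup>2 - s\<^sup>2) * (- X * k - Y * s))"
proof -
  have "k * X - s * Y + (2 * s * k * (- X * s + Y * k) + (k\<^sup>2 - s\<^sup>2) * (- X * k - Y * s))
     = (k * X - s * Y) * (1 - (s\<^sup>2 + k\<^sup>2))"
    by (simp add: power2_eq_square algebra_simps)
  then show ?thesis using assms by simp
qed

lemma bc_bound:
  assumes "inscribed_on_side A0 B0 C0 B0 C0 P Q R"
  shows "dist P Q \<le> 2 * sg"
proof -
  have seg: "P \<in> closed_segment B0 C0" "Q \<in> closed_segment B0 C0"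
    and eq: "equilateral P Q R" and hR: "R \<in> convex hull {A0,B0,C0}"
    using assms hull_inc[of R "{P,Q,R}"] unfolding inscribed_on_side_def by auto
  obtain x where x: "0 \<le> x" "x \<le> 1" "P = (1 - x) *\<^sub>R B0 + x *\<^sub>R C0"
    using seg(1) unfolding in_segment by blast
  obtain y where y: "0 \<le> y" "y \<le> 1" "Q = (1 - y) *\<^sub>R B0 + y *\<^sub>R C0"
    using seg(2) unfolding in_segment by blast
  obtain al be ga where abg: "0 \<le> al" "0 \<le> be" "0 \<le> ga" "al + be + ga = 1"
    "R = al *\<^sub>R A0 + be *\<^sub>R B0 + ga *\<^sub>R C0"
    using hR unfolding convex_hull_3 by blast
  have P: "Re P = 2 * sg - x * sg" "Im P = x * kp" unfolding x(3)
    by (simp_all add: B0_def C0_def algebra_simps)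
  have Q: "Re Q = 2 * sg - y * sg" "Im Q = y * kp" unfolding y(3)
    by (simp_all add: B0_def C0_def algebra_simps)
  have R: "Re R = 2 * sg * be + sg * ga" "Im R = kp * ga" unfolding abg(5)
    by (simp_all add: A0_def B0_def C0_def algebra_simps)
  define X where "X = Re R - 2 * sg"
  define Y where "Y = Im R"
  define a where "a = - X * sg + Y * kp"
  define b where "b = - X * kp - Y * sg"
  have dPQ: "(dist P Q)\<^sup>2 = (x - y)\<^sup>2"
  proof -
    have "(dist P Q)\<^sup>2 = (y * sg - x * sg)\<^sup>2 + (x * kp - y * kp)\<^sup>2" unfolding d2 P Q by simp
    also have "\<dots> = (x - y)\<^sup>2 * (sg\<^sup>2 + kp\<^sup>2)" by (simp add: power2_eq_square algebra_simps)
    finally show ?thesis using sk1 by simp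
  qed
  have dRP: "(dist R P)\<^sup>2 = (a - x)\<^sup>2 + b\<^sup>2"
    unfolding d2 P a_def b_def using frame1[OF sk1, of X x Y] unfolding X_def Y_def
    by (simp add: algebra_simps)
  have dQR: "(dist Q R)\<^sup>2 = (a - y)\<^sup>2 + b\<^sup>2"
    unfolding d2 Q a_def b_def using frame1[OF sk1, of X y Y] unfolding X_def Y_def
    by (simp add: algebra_simps power2_commute)
  have eqs: "dist P Q = dist Q R" "dist P Q = dist R P" "dist P Q > 0"
    using eq unfolding equilateral_def by auto
  have xy: "x \<noteq> y" using eqs(3) dPQ by auto
  have "(a - x)\<^sup>2 = (a - y)\<^sup>2" using dRP dQR eqs by simp
  then have "(x - y) * (x + y - 2 * a) = 0" by (simp add: power2_eq_square algebra_simps)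
  then have ha: "a = (x + y) / 2" using xy by simp
  have "b\<^sup>2 = (x - y)\<^sup>2 - (a - x)\<^sup>2" using dRP dPQ eqs by simp
  also have "\<dots> = (sqrt 3 / 2 * \<bar>x - y\<bar>)\<^sup>2"
  proof -
    have "(sqrt 3 / 2 * \<bar>x - y\<bar>)\<^sup>2 = 3/4 * (x - y)\<^sup>2"
      by (simp add: power_mult_distrib power_divide)
    moreover have "(x - y)\<^sup>2 - ((x + y) / 2 - x)\<^sup>2 = 3/4 * (x - y)\<^sup>2"
      by (simp add: power2_eq_square field_simps)
    ultimately show ?thesis unfolding ha by simp
  qed
  finally have b2: "b\<^sup>2 = (sqrt 3 / 2 * \<bar>x - y\<bar>)\<^sup>2" .
  have bal: "b = 2 * sg * kp * al"
  proof -
    have e: "al = 1 - be - ga" using abg(4) by simp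
    show ?thesis unfolding b_def X_def Y_def R e by (simp add: algebra_simps)
  qed
  have b0: "b \<ge> 0" unfolding bal using sg_pos kp_pos abg(1) by simp
  have hb: "b = sqrt 3 / 2 * \<bar>x - y\<bar>"
    using b2 b0 by (simp add: power2_eq_iff_nonneg)
  have c1: "kp * Re R - sg * Im R = 2 * sg * kp * be" unfolding R by (simp add: algebra_simps)
  have c2: "kp * Re R - sg * Im R = 2 * sg * kp - (2 * sg * kp * a + (kp\<^sup>2 - sg\<^sup>2) * b)"
    using frame2[OF sk1, of X Y] unfolding a_def b_def X_def Y_def by (simp add: algebra_simps)
  have ca: "2 * sg * kp * a + (kp\<^sup>2 - sg\<^sup>2) * b \<le> 2 * sg * kp"
  proof -
    have "0 \<le> 2 * sg * kp * be" using sg_pos kp_pos abg(2) by simp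
    then show ?thesis using c1 c2 by linarith
  qed
  have "\<bar>x - y\<bar> \<le> x + y" using x y by linarith
  then have "sg * kp * \<bar>x - y\<bar> \<le> sg * kp * (x + y)"
    using sg_pos kp_pos by (intro mult_left_mono) auto
  moreover have "kp * \<bar>x - y\<bar> = sg * kp * \<bar>x - y\<bar> + (kp\<^sup>2 - sg\<^sup>2) * b"
    unfolding hb using F2 by (metis (no_types, lifting) distrib_right mult.assoc mult.commute)
  moreover have "2 * sg * kp * a = sg * kp * (x + y)" unfolding ha by simp
  ultimately have "kp * \<bar>x - y\<bar> \<le> 2 * sg * kp" using ca by linarith
  then have "kp * \<bar>x - y\<bar> \<le> kp * (2 * sg)" by (simp add: algebra_simps)
  then have "\<bar>x - y\<bar> \<le> 2 * sg" using kp_pos by simp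
  moreover have "dist P Q = \<bar>x - y\<bar>" using dPQ by (metis power2_eq_iff_nonneg zero_le_dist abs_ge_zero power2_abs)
  ultimately show ?thesis by simp
qed



definition RA :: complex where "RA = Complex sg (sqrt 3 * sg)"
definition QB :: complex where "QB = Complex (2 * sg - 2 * sg\<^sup>2) (2 * sg * kp)"
definition RB :: complex where "RB = Complex (2 * sg - sg\<^sup>2 - sqrt 3 * sg * kp) (sg * kp - sqrt 3 * sg\<^sup>2)"

lemma s3: "sqrt 3 * sqrt 3 = (3::real)" by simp

lemma ab_ex: "inscribed_on_side A0 B0 C0 A0 B0 A0 B0 RA" "dist A0 B0 = 2 * sg"
proof -
  show d: "dist A0 B0 = 2 * sg" using sg_pos unfolding A0_def B0_def by simp
  have d2: "dist B0 RA = 2 * sg" unfolding dist_eq_sq B0_def RA_def using sg_pos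
    by (simp add: power2_eq_square algebra_simps)
  have d3: "dist RA A0 = 2 * sg" unfolding dist_eq_sq A0_def RA_def using sg_pos
    by (simp add: power2_eq_square algebra_simps)
  have eq: "equilateral A0 B0 RA" unfolding equilateral_def d d2 d3 using sg_pos by simp
  define g where "g = sqrt 3 * sg / kp"
  have g0: "0 \<le> g" "g \<le> 1" unfolding g_def using k3 sg_pos kp_pos by (auto simp: field_simps)
  have "RA \<in> convex hull {A0, B0, C0}"
  proof (rule hull3I[of "(1 - g)/2" "(1 - g)/2" g])
    show "RA = ((1 - g) / 2) *\<^sub>R A0 + ((1 - g) / 2) *\<^sub>R B0 + g *\<^sub>R C0"
      unfolding RA_def A0_def B0_def C0_def g_def using kp_pos
      by (simp add: complex_eq_iff field_simps)
  qed (use g0 in auto)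
  then have "{A0, B0, RA} \<subseteq> convex hull {A0, B0, C0}" by (auto intro: hull_inc)
  then show "inscribed_on_side A0 B0 C0 A0 B0 A0 B0 RA"
    unfolding inscribed_on_side_def using eq convex_hull_subset by blast
qed

lemma bc_ex: "inscribed_on_side A0 B0 C0 B0 C0 B0 QB RB" "dist B0 QB = 2 * sg"
proof -
  have sq: "4 * sg\<^sup>2 * (sg\<^sup>2 + kp\<^sup>2) = (2 * sg)\<^sup>2" using sk1 by (simp add: power2_eq_square)
  show d: "dist B0 QB = 2 * sg" unfolding dist_eq_sq B0_def QB_def using sg_pos sq[symmetric]
    by (simp add: power2_eq_square algebra_simps)
  have d2: "dist QB RB = 2 * sg" unfolding dist_eq_sq RB_def QB_def using sg_pos sq[symmetric]
    by (simp add: power2_eq_square algebra_simps)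
  have d3: "dist RB B0 = 2 * sg" unfolding dist_eq_sq B0_def RB_def using sg_pos sq[symmetric]
    by (simp add: power2_eq_square algebra_simps)
  have eq: "equilateral B0 QB RB" unfolding equilateral_def d d2 d3 using sg_pos by simp
  have "QB \<in> closed_segment B0 C0" unfolding in_segment
  proof (intro exI conjI)
    show "QB = (1 - 2 * sg) *\<^sub>R B0 + (2 * sg) *\<^sub>R C0" unfolding QB_def B0_def C0_def
      by (simp add: complex_eq_iff power2_eq_square algebra_simps)
  qed (use sg_pos sg_half in auto)
  then have seg: "closed_segment B0 QB \<subseteq> closed_segment B0 C0"
    unfolding subset_closed_segment by simp
  then have q: "QB \<in> convex hull {A0, B0, C0}"
    using segment_convex_hull hull_mono[of "{B0, C0}" "{A0, B0, C0}"] by blast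
  define g where "g = (sg * kp - sqrt 3 * sg\<^sup>2) / kp"
  have "sqrt 3 * sg * sg \<le> kp * sg" using k3 sg_pos by (intro mult_right_mono) auto
  then have "0 \<le> sg * kp - sqrt 3 * sg\<^sup>2" by (simp add: power2_eq_square algebra_simps)
  then have g0: "0 \<le> g" unfolding g_def using kp_pos by simp
  have "sg * kp - sqrt 3 * sg\<^sup>2 \<le> kp" using sg_half kp_pos
  proof -
    have "sg * kp \<le> 1 * kp" using sg_half kp_pos by (intro mult_right_mono) auto
    moreover have "0 \<le> sqrt 3 * sg\<^sup>2" by simp
    ultimately show ?thesis by linarith
  qed
  then have g1: "g \<le> 1" unfolding g_def using kp_pos by simp
  have F: "2 * sg * kp - 2 * sg\<^sup>2 * kp - sqrt 3 * sg * (kp\<^sup>2 - sg\<^sup>2) = 0"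
  proof -
    have F2': "2 * sg * kp + sqrt 3 * (kp\<^sup>2 - sg\<^sup>2) = 2 * kp" using F2 by (simp add: field_simps)
    have "sg * (2 * sg * kp + sqrt 3 * (kp\<^sup>2 - sg\<^sup>2)) = sg * (2 * kp)" unfolding F2' ..
    then show ?thesis by (simp add: algebra_simps power2_eq_square)
  qed
  have "RB \<in> convex hull {A0, B0, C0}"
  proof (rule hull3I[of "1 - g" 0 g])
    have "g * sg = 2 * sg - sg\<^sup>2 - sqrt 3 * sg * kp"
    proof -
      have kg: "kp * g = sg * kp - sqrt 3 * sg\<^sup>2" unfolding g_def using kp_pos by simp
      have "kp * (g * sg) - kp * (2 * sg - sg\<^sup>2 - sqrt 3 * sg * kp) =
          - (2 * sg * kp - 2 * sg\<^sup>2 * kp - sqrt 3 * sg * (kp\<^sup>2 - sg\<^sup>2))"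
        unfolding mult.assoc[symmetric] kg by (simp add: algebra_simps power2_eq_square)
      then have "kp * (g * sg - (2 * sg - sg\<^sup>2 - sqrt 3 * sg * kp)) = 0" unfolding F
        by (simp add: algebra_simps)
      then show ?thesis using kp_pos by simp
    qed
    moreover have "g * kp = sg * kp - sqrt 3 * sg\<^sup>2" unfolding g_def using kp_pos by simp
    ultimately show "RB = (1 - g) *\<^sub>R A0 + 0 *\<^sub>R B0 + g *\<^sub>R C0"
      unfolding RB_def A0_def C0_def by (simp add: complex_eq_iff)
  qed (use g0 g1 in auto)
  then have "{B0, QB, RB} \<subseteq> convex hull {A0, B0, C0}" using q by (auto intro: hull_inc)
  then show "inscribed_on_side A0 B0 C0 B0 C0 B0 QB RB"
    unfolding inscribed_on_side_def using eq seg convex_hull_subset by blast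
qed



lemma lin_neg_cnj: "linear (\<lambda>z::complex. - cnj z)"
  by (rule linearI) (simp_all add: scaleR_conv_of_real)

interpretation rf: simil "\<lambda>z. - cnj z" 1 "complex_of_real (2 * sg)"
proof -
  have s: "surj (\<lambda>z::complex. - cnj z)" by (rule surjI[of _ "\<lambda>z. - cnj z"]) simp
  show "simil (\<lambda>z. - cnj z) 1"
    by unfold_locales (use lin_neg_cnj s in \<open>auto simp: algebra_simps\<close>)
qed

abbreviation "gg \<equiv> rf.f"

lemma gg_pts: "gg A0 = B0" "gg B0 = A0" "gg C0 = C0" "gg (gg z) = z"
  unfolding rf.f_def A0_def B0_def C0_def by (simp_all add: complex_eq_iff)

lemma insc_perm: "inscribed_on_side A B C X Y P Q R \<longleftrightarrow> inscribed_on_side B A C Y X P Q R"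
  unfolding inscribed_on_side_def by (simp add: insert_commute closed_segment_commute)

lemma ca_bound:
  assumes "inscribed_on_side A0 B0 C0 C0 A0 P Q R"
  shows "dist P Q \<le> 2 * sg"
proof -
  have "inscribed_on_side (gg A0) (gg B0) (gg C0) (gg C0) (gg A0) (gg P) (gg Q) (gg R)"
    using assms rf.f_insc by blast
  then have "inscribed_on_side A0 B0 C0 B0 C0 (gg P) (gg Q) (gg R)"
    unfolding gg_pts using insc_perm by blast
  then have "dist (gg P) (gg Q) \<le> 2 * sg" by (rule bc_bound)
  then show ?thesis unfolding rf.f_dist by simp
qed

lemma ca_ex: "inscribed_on_side A0 B0 C0 C0 A0 (gg B0) (gg QB) (gg RB)" "dist (gg B0) (gg QB) = 2 * sg"
proof -
  have "inscribed_on_side (gg A0) (gg B0) (gg C0) (gg B0) (gg C0) (gg B0) (gg QB) (gg RB)"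
    using bc_ex(1) rf.f_insc by blast
  then show "inscribed_on_side A0 B0 C0 C0 A0 (gg B0) (gg QB) (gg RB)"
    unfolding gg_pts(1-3) using insc_perm by blast
  show "dist (gg B0) (gg QB) = 2 * sg" unfolding rf.f_dist using bc_ex(2) by simp
qed

definition CONCL :: "complex \<Rightarrow> complex \<Rightarrow> complex \<Rightarrow> bool" where
  "CONCL A B C \<longleftrightarrow> (\<exists>P Q R. is_WET A B C B C P Q R) \<and>
         (\<exists>P Q R. is_WET A B C C A P Q R) \<and>
         (\<exists>P Q R. is_WET A B C A B P Q R) \<and>
         (\<forall>P1 Q1 R1 P2 Q2 R2 P3 Q3 R3.
            is_WET A B C B C P1 Q1 R1 \<and> is_WET A B C C A P2 Q2 R2 \<and>
            is_WET A B C A B P3 Q3 R3 \<longrightarrow>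
            tri_congruent P1 Q1 R1 P2 Q2 R2 \<and> tri_congruent P2 Q2 R2 P3 Q3 R3)"

lemma CONCL_T0: "CONCL A0 B0 C0"
proof -
  have w1: "is_WET A0 B0 C0 B0 C0 B0 QB RB"
    "\<And>P Q R. is_WET A0 B0 C0 B0 C0 P Q R \<Longrightarrow> dist P Q = 2 * sg \<and> dist Q R = 2 * sg \<and> dist R P = 2 * sg"
    using wet_from_bound[OF bc_ex] bc_bound by blast+
  have w2: "is_WET A0 B0 C0 C0 A0 (gg B0) (gg QB) (gg RB)"
    "\<And>P Q R. is_WET A0 B0 C0 C0 A0 P Q R \<Longrightarrow> dist P Q = 2 * sg \<and> dist Q R = 2 * sg \<and> dist R P = 2 * sg"
    using wet_from_bound[OF ca_ex] ca_bound by blast+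
  have w3: "is_WET A0 B0 C0 A0 B0 A0 B0 RA"
    "\<And>P Q R. is_WET A0 B0 C0 A0 B0 P Q R \<Longrightarrow> dist P Q = 2 * sg \<and> dist Q R = 2 * sg \<and> dist R P = 2 * sg"
    using wet_from_bound[OF ab_ex] ab_bound by blast+
  have U: "tri_congruent P1 Q1 R1 P2 Q2 R2 \<and> tri_congruent P2 Q2 R2 P3 Q3 R3"
    if h:  "is_WET A0 B0 C0 B0 C0 P1 Q1 R1 \<and> is_WET A0 B0 C0 C0 A0 P2 Q2 R2 \<and>
      is_WET A0 B0 C0 A0 B0 P3 Q3 R3" for P1 Q1 R1 P2 Q2 R2 P3 Q3 R3
  proof -
    have "dist P1 Q1 = 2 * sg \<and> dist Q1 R1 = 2 * sg \<and> dist R1 P1 = 2 * sg" using h w1(2) by blast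
    moreover have "dist P2 Q2 = 2 * sg \<and> dist Q2 R2 = 2 * sg \<and> dist R2 P2 = 2 * sg" using h w2(2) by blast
    moreover have "dist P3 Q3 = 2 * sg \<and> dist Q3 R3 = 2 * sg \<and> dist R3 P3 = 2 * sg" using h w3(2) by blast
    ultimately show "tri_congruent P1 Q1 R1 P2 Q2 R2 \<and> tri_congruent P2 Q2 R2 P3 Q3 R3"
      unfolding tri_congruent_def by simp
  qed
  show ?thesis unfolding CONCL_def using U w1(1) w2(1) w3(1) by blast
qed

context simil begin
lemma CONCL_transfer: assumes "CONCL A B C" shows "CONCL (f A) (f B) (f C)"
proof -
  have e: "\<exists>P Q R. is_WET (f A) (f B) (f C) (f X) (f Y) P Q R"
    if "\<exists>P Q R. is_WET A B C X Y P Q R" for X Y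
    using that f_wet by blast
  have pre: "\<exists>P'. P = f P'" for P using f_surj by (metis surjD)
  have E: "\<exists>P Q R. is_WET (f A) (f B) (f C) (f B) (f C) P Q R"
      "\<exists>P Q R. is_WET (f A) (f B) (f C) (f C) (f A) P Q R"
      "\<exists>P Q R. is_WET (f A) (f B) (f C) (f A) (f B) P Q R"
      using assms e unfolding CONCL_def by blast+
  have U: "tri_congruent P1 Q1 R1 P2 Q2 R2 \<and> tri_congruent P2 Q2 R2 P3 Q3 R3"
    if h: "is_WET (f A) (f B) (f C) (f B) (f C) P1 Q1 R1 \<and>
       is_WET (f A) (f B) (f C) (f C) (f A) P2 Q2 R2 \<and> is_WET (f A) (f B) (f C) (f A) (f B) P3 Q3 R3"
    for P1 Q1 R1 P2 Q2 R2 P3 Q3 R3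
  proof -
    obtain p1 q1 r1 p2 q2 r2 p3 q3 r3 where
      eqs: "P1 = f p1" "Q1 = f q1" "R1 = f r1" "P2 = f p2" "Q2 = f q2" "R2 = f r2"
        "P3 = f p3" "Q3 = f q3" "R3 = f r3" using pre by metis
    have "is_WET A B C B C p1 q1 r1" "is_WET A B C C A p2 q2 r2" "is_WET A B C A B p3 q3 r3"
      using h unfolding eqs f_wet by auto
    then have "tri_congruent p1 q1 r1 p2 q2 r2 \<and> tri_congruent p2 q2 r2 p3 q3 r3"
      using assms unfolding CONCL_def by blast
    then show "tri_congruent P1 Q1 R1 P2 Q2 R2 \<and> tri_congruent P2 Q2 R2 P3 Q3 R3"
      by (simp add: eqs f_cong)
  qed
  show ?thesis unfolding CONCL_def using E U by blast
qed
end



lemma cos80: "cos (80 * pi / 180) = sg"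
proof -
  have "pi / 2 - 80 * pi / 180 = pi / 18" by simp
  then show ?thesis unfolding sg_def cos_sin_eq by simp
qed

lemma angle_cos:
  assumes "angle_at V X Y = 80 * pi / 180"
  shows "X \<noteq> V" "Y \<noteq> V" "inner (X - V) (Y - V) = sg * (norm (X - V) * norm (Y - V))"
proof -
  define q where "q = inner (X - V) (Y - V) / (norm (X - V) * norm (Y - V))"
  have a: "arccos q = 80 * pi / 180" using assms unfolding angle_at_def q_def .
  have nz: "norm (X - V) * norm (Y - V) \<noteq> 0"
  proof
    assume "norm (X - V) * norm (Y - V) = 0"
    then have "q = 0" unfolding q_def by simp
    then have "pi / 2 = 80 * pi / 180" using a arccos_0 by simp
    then show False using pi_gt_zero by linarith
  qed
  then show "X \<noteq> V" "Y \<noteq> V" by auto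
  have "\<bar>inner (X - V) (Y - V)\<bar> \<le> norm (X - V) * norm (Y - V)" by (rule Cauchy_Schwarz_ineq2)
  moreover have pos: "norm (X - V) * norm (Y - V) > 0" using nz
    by (metis mult_nonneg_nonneg norm_ge_zero order_le_less)
  ultimately have "\<bar>q\<bar> \<le> 1" unfolding q_def abs_divide abs_of_pos[OF pos]
    using pos by (simp add: divide_le_eq_1_pos)
  then have "cos (arccos q) = q" by (intro cos_arccos) auto
  then have "q = sg" unfolding a cos80 by simp
  then show "inner (X - V) (Y - V) = sg * (norm (X - V) * norm (Y - V))"
  proof -
    have "inner (X - V) (Y - V) = q * (norm (X - V) * norm (Y - V))" unfolding q_def using nz by simp
    then show ?thesis using \<open>q = sg\<close> by simp
  qed
qed

lemma inner_mult: "inner z (z * w) = (cmod z)\<^sup>2 * Re w"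
  unfolding cmod_power2 by (simp add: inner_complex_def algebra_simps power2_eq_square)

lemma shape:
  assumes h1: "angle_at A B C = 80 * pi / 180" and h2: "angle_at B C A = 80 * pi / 180"
  shows "B \<noteq> A" "C - A = (B - A) * Complex (1/2) (kp / (2 * sg)) \<or>
     C - A = (B - A) * Complex (1/2) (- (kp / (2 * sg)))"
proof -
  note c1 = angle_cos[OF h1] and c2 = angle_cos[OF h2]
  define D where "D = B - A"
  define w where "w = (C - A) / D"
  show "B \<noteq> A" by (rule c1(1))
  then have Dn: "D \<noteq> 0" unfolding D_def by simp
  have E: "C - A = D * w" unfolding w_def using Dn by simp
  have nD: "cmod D > 0" using Dn by simp
  have "(cmod D)\<^sup>2 * Re w = sg * (cmod D * (cmod D * cmod w))"
    using c1(3) unfolding D_def[symmetric] E inner_mult norm_mult .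
  then have "(cmod D)\<^sup>2 * Re w = (cmod D)\<^sup>2 * (sg * cmod w)" by (simp add: power2_eq_square algebra_simps)
  then have r1: "Re w = sg * cmod w" using nD by simp
  have "C - B = D * (w - 1)" unfolding D_def using E D_def by (simp add: algebra_simps)
  moreover have "A - B = - D" unfolding D_def by simp
  moreover have "inner (D * (w - 1)) D = (cmod D)\<^sup>2 * Re (w - 1)"
    using inner_mult[of D "w - 1"] by (simp add: inner_commute)
  ultimately have "- ((cmod D)\<^sup>2 * Re (w - 1)) = sg * (cmod D * cmod (w - 1) * cmod D)"
    using c2(3) by (simp add: inner_mult norm_mult)
  then have "(cmod D)\<^sup>2 * (1 - Re w) = (cmod D)\<^sup>2 * (sg * cmod (w - 1))"
    by (simp add: power2_eq_square algebra_simps)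
  then have r2: "1 - Re w = sg * cmod (w - 1)" using nD by simp
  define x where "x = Re w"
  define y where "y = Im w"
  have kp2: "kp\<^sup>2 = 1 - sg\<^sup>2" using sk1 by simp
  have x0: "x \<ge> 0" "1 - x \<ge> 0" using r1 r2 sg_pos unfolding x_def by simp_all
  have "x\<^sup>2 = (sg * cmod w)\<^sup>2" using r1 unfolding x_def by simp
  also have "\<dots> = sg\<^sup>2 * (x\<^sup>2 + y\<^sup>2)" unfolding power_mult_distrib cmod_power2 x_def y_def ..
  finally have "x\<^sup>2 = sg\<^sup>2 * (x\<^sup>2 + y\<^sup>2)" .
  moreover have "kp\<^sup>2 * x\<^sup>2 = x\<^sup>2 - sg\<^sup>2 * x\<^sup>2" unfolding kp2 by (simp add: algebra_simps)
  ultimately have q1: "kp\<^sup>2 * x\<^sup>2 = sg\<^sup>2 * y\<^sup>2" by (simp add: algebra_simps)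
  have "(1 - x)\<^sup>2 = (sg * cmod (w - 1))\<^sup>2" using r2 unfolding x_def by simp
  also have "\<dots> = sg\<^sup>2 * ((x - 1)\<^sup>2 + y\<^sup>2)" unfolding power_mult_distrib cmod_power2 x_def y_def by simp
  finally have "(1 - x)\<^sup>2 = sg\<^sup>2 * ((x - 1)\<^sup>2 + y\<^sup>2)" .
  moreover have "kp\<^sup>2 * (1 - x)\<^sup>2 = (1 - x)\<^sup>2 - sg\<^sup>2 * (1 - x)\<^sup>2" unfolding kp2 by (simp add: algebra_simps)
  moreover have "(x - 1)\<^sup>2 = (1 - x)\<^sup>2" by (rule power2_commute)
  ultimately have q2: "kp\<^sup>2 * (1 - x)\<^sup>2 = sg\<^sup>2 * y\<^sup>2" by (simp add: algebra_simps)
  have "kp\<^sup>2 * x\<^sup>2 = kp\<^sup>2 * (1 - x)\<^sup>2" using q1 q2 by simp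
  then have "x\<^sup>2 = (1 - x)\<^sup>2" using kp_pos by simp
  then have "x = 1 - x" using x0 by (simp add: power2_eq_iff_nonneg)
  then have xh: "x = 1/2" by simp
  have "sg\<^sup>2 * y\<^sup>2 = kp\<^sup>2 * (1/2)\<^sup>2" using q1 unfolding xh by simp
  then have "sg\<^sup>2 * y\<^sup>2 = kp\<^sup>2 / 4" by (simp add: power_divide)
  moreover have "sg\<^sup>2 * (kp / (2 * sg))\<^sup>2 = kp\<^sup>2 / 4" using sg_pos
    by (simp add: power_divide power_mult_distrib)
  ultimately have "sg\<^sup>2 * y\<^sup>2 = sg\<^sup>2 * (kp / (2 * sg))\<^sup>2" by linarith
  then have "y\<^sup>2 = (kp / (2 * sg))\<^sup>2" using sg_pos by simp
  then have "y = kp / (2 * sg) \<or> y = - (kp / (2 * sg))" using power2_eq_iff by blast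
  then have "w = Complex (1/2) (kp / (2 * sg)) \<or> w = Complex (1/2) (- (kp / (2 * sg)))"
    using xh unfolding x_def y_def by (auto simp: complex_eq_iff)
  then show "C - A = (B - A) * Complex (1/2) (kp / (2 * sg)) \<or>
     C - A = (B - A) * Complex (1/2) (- (kp / (2 * sg)))" using E unfolding D_def by auto
qed



lemma Im_ofr: "Im (complex_of_real r * z) = r * Im z" by simp

lemma simil_mult: "a \<noteq> 0 \<Longrightarrow> simil (\<lambda>z. a * z) (cmod a)"
proof (rule simil.intro)
  show "linear (\<lambda>z. a * z)" by (rule linearI) (simp_all add: scaleR_conv_of_real algebra_simps)
  show "surj (\<lambda>z. a * z)" if "a \<noteq> 0" using that by (intro surjI[of _ "\<lambda>z. z / a"]) simp
  fix u v
  have e: "cnj a * a = of_real ((cmod a)\<^sup>2)" by (metis complex_norm_square mult.commute)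
  have "cnj (a * u) * (a * v) = (cnj a * a) * (cnj u * v)" by (simp add: algebra_simps)
  then have h: "cnj (a * u) * (a * v) = of_real ((cmod a)\<^sup>2) * (cnj u * v)" unfolding e .
  show "\<bar>Im (cnj (a * u) * (a * v))\<bar> = (cmod a)\<^sup>2 * \<bar>Im (cnj u * v)\<bar>"
    unfolding h Im_ofr abs_mult by simp
qed (auto simp: norm_mult)

lemma simil_cmult: "a \<noteq> 0 \<Longrightarrow> simil (\<lambda>z. a * cnj z) (cmod a)"
proof (rule simil.intro)
  show "linear (\<lambda>z. a * cnj z)" by (rule linearI) (simp_all add: scaleR_conv_of_real algebra_simps)
  show "surj (\<lambda>z. a * cnj z)" if "a \<noteq> 0" using that by (intro surjI[of _ "\<lambda>z. cnj (z / a)"]) simp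
  fix u v
  have e: "cnj a * a = of_real ((cmod a)\<^sup>2)" by (metis complex_norm_square mult.commute)
  have "cnj (a * cnj u) * (a * cnj v) = (cnj a * a) * cnj (cnj u * v)" by (simp add: algebra_simps)
  then have h: "cnj (a * cnj u) * (a * cnj v) = of_real ((cmod a)\<^sup>2) * cnj (cnj u * v)" unfolding e .
  show "\<bar>Im (cnj (a * cnj u) * (a * cnj v))\<bar> = (cmod a)\<^sup>2 * \<bar>Im (cnj u * v)\<bar>"
    unfolding h Im_ofr abs_mult by (simp add: abs_minus_commute)
qed (auto simp: norm_mult)

lemma CONCL_main:
  assumes h1: "angle_at A B C = 80 * pi / 180" and h2: "angle_at B C A = 80 * pi / 180"
  shows "CONCL A B C"
proof -
  note sh = shape[OF h1 h2]
  define D where "D = B - A"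
  define a where "a = D / complex_of_real (2 * sg)"
  have sg0: "complex_of_real (2 * sg) \<noteq> 0" using sg_pos by simp
  have a0: "a \<noteq> 0" unfolding a_def D_def using sh(1) sg0 by simp
  have aB: "a * B0 = D" unfolding a_def B0_def using sg0 by simp
  have c1: "Complex sg kp = complex_of_real (2 * sg) * Complex (1/2) (kp / (2 * sg))"
    using sg_pos by (simp add: complex_eq_iff)
  have c2: "cnj (Complex sg kp) = complex_of_real (2 * sg) * Complex (1/2) (- (kp / (2 * sg)))"
    using sg_pos by (simp add: complex_eq_iff)
  from sh(2) show ?thesis
  proof
    assume hc: "C - A = (B - A) * Complex (1/2) (kp / (2 * sg))"
    interpret s1: simil "\<lambda>z. a * z" "cmod a" A using simil_mult[OF a0] .
    have fz: "s1.f z = A + a * z" for z by (simp add: s1.f_def)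
    have "a * C0 = C - A" unfolding C0_def c1 hc D_def[symmetric] a_def using sg0 by simp
    then have "s1.f A0 = A" "s1.f B0 = B" "s1.f C0 = C"
      unfolding fz using aB by (simp_all add: A0_def D_def)
    then show ?thesis using s1.CONCL_transfer[OF CONCL_T0] by simp
  next
    assume hc: "C - A = (B - A) * Complex (1/2) (- (kp / (2 * sg)))"
    interpret s2: simil "\<lambda>z. a * cnj z" "cmod a" A using simil_cmult[OF a0] .
    have fz: "s2.f z = A + a * cnj z" for z by (simp add: s2.f_def)
    have "a * cnj C0 = C - A" unfolding C0_def c2 hc D_def[symmetric] a_def using sg0 by simp
    moreover have "cnj B0 = B0" unfolding B0_def by simp
    ultimately have "s2.f A0 = A" "s2.f B0 = B" "s2.f C0 = C"
      unfolding fz using aB by (simp_all add: A0_def D_def)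
    then show ?thesis using s2.CONCL_transfer[OF CONCL_T0] by simp
  qed
qed

theorem mainTheorem5:
  fixes A B C :: complex
  assumes "angle_at A B C = 80 * pi / 180"
      and "angle_at B C A = 80 * pi / 180"
      and "angle_at C A B = 20 * pi / 180"
  shows "(\<exists>P Q R. is_WET A B C B C P Q R) \<and>
         (\<exists>P Q R. is_WET A B C C A P Q R) \<and>
         (\<exists>P Q R. is_WET A B C A B P Q R) \<and>
         (\<forall>P1 Q1 R1 P2 Q2 R2 P3 Q3 R3.
            is_WET A B C B C P1 Q1 R1 \<and> is_WET A B C C A P2 Q2 R2 \<and>
            is_WET A B C A B P3 Q3 R3 \<longrightarrow>
            tri_congruent P1 Q1 R1 P2 Q2 R2 \<and> tri_congruent P2 Q2 R2 P3 Q3 R3)"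
  using CONCL_main[OF assms(1,2)] unfolding CONCL_def .

end
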